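(* For $P,Q\in\mathcal E_n$ homogeneous of the same degree, the scalars $\Delta_P(Q)$, $\Delta_Q(P)$, $(P)\nabla_Q$ and $(Q)\nabla_P$ (elements of $\mathcal E_n^0=\mathbb Q$) are all equal. Consequently, setting $\langle P,Q\rangle$ equal to this common value for $P,Q$ homogeneous of equal degree and $\langle P,Q\rangle=0$ for homogeneous $P,Q$ of different degrees defines a symmetric bilinear form on $\mathcal E_n$, and for all $P_1,P_2,Q$: $\langle P_1P_2,Q\rangle=\langle P_1,\Delta_{P_2}(Q)\rangle=\langle P_2,(Q)\nabla_{P_1}\rangle$ (i.e. $\Delta_{P}$ is adjoint to right multiplication by $P$ and $\nabla_P$ to left multiplication by $P$).
   Context: Let $n\ge 1$. The Fomin–Kirillov algebra $\mathcal E_n$ is the associative $\mathbb Q$-algebra with generators $x_{ij}$ for ordered pairs of distinct $i,j\in[n]$, subject to $x_{ij}=-x_{ji}$, $x_{ij}^2=0$, $x_{ij}x_{kl}=x_{kl}x_{ij}$ for distinct $i,j,k,l$, and $x_{ij}x_{jk}+x_{jk}x_{ki}+x_{ki}x_{ij}=0$ for distinct $i,j,k$. It is graded by degree; $\mathcal E_n^d$ is the degree-$d$ part. $\mathcal E_n$ is also graded by $S_n$: the $S_n$-degree of $x_{ij}$ is the transposition $\sigma_{ij}=(i\,j)$, extended multiplicatively; $\sigma_Q$ is the $S_n$-degree of an $S_n$-homogeneous $Q$; $S_n$ acts by automorphisms via $\sigma(x_{ij})=x_{\sigma(i)\sigma(j)}$. For distinct $a,b$, $\Delta_{ab}:\mathcal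 E_n\to\mathcal E_n$ is the unique linear map with $\Delta_{ab}(x_{ij})=1$ if $(i,j)=(a,b)$, $-1$ if $(i,j)=(b,a)$, $0$ otherwise, and $\Delta_{ab}(PQ)=\Delta_{ab}(P)Q+\sigma_{ab}(P)\Delta_{ab}(Q)$; and $\nabla_{ab}$ (written on the right) is the unique linear map with $(x_{ij})\nabla_{ab}=\Delta_{ab}(x_{ij})$ and $(PQ)\nabla_{ab}=P\cdot(Q)\nabla_{ab}+(P)\nabla_{\sigma_Q(a)\sigma_Q(b)}\cdot Q$ for $S_n$-homogeneous $Q$. These operators satisfy the defining relations of $\mathcal E_n$ (with $x_{ab}\mapsto\Delta_{ab}$, resp. $\nabla_{ab}$), so for $P=x_{i_1j_1}\cdots x_{i_kj_k}$ one defines $\Delta_P=\Delta_{i_1j_1}\circ\cdots\circ\Delta_{i_kj_k}$ and $(Q)\nabla_P=(\cdots((Q)\nabla_{i_1j_1})\cdots)\nabla_{i_kj_k}$, extended linearly to all $P\in\mathcal E_n$. *)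

theory Defs
  imports Complex_Main
begin

text \<open>Free associative Q-algebra on the generators x_ij, represented by coefficient
functions on words (lists of ordered pairs (i,j)). The Fomin-Kirillov algebra E_n is the
quotient of the free algebra on the generators x_ij (i,j in {1..n}, i ~= j) by the two-sided
ideal fk_ideal n; elements of E_n are handled via representatives and the congruence fk_cong.\<close>

type_synonym fa = "(nat \<times> nat) list \<Rightarrow> rat"

definition fk_gens :: "nat \<Rightarrow> (nat \<times> nat) set" where
  "fk_gens n = {(i, j). i \<in> {1..n} \<and> j \<in> {1..n} \<and> i \<noteq> j}"

definition fa_elem :: "nat \<Rightarrow> fa \<Rightarrow> bool" where
  "fa_elem n P \<longleftrightarrow> finite {w. P w \<noteq> 0} \<and> (\<forall>w. P w \<noteq> 0 \<longrightarrow> set w \<subseteq> fk_gens n)"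

definition fa_word :: "(nat \<times> nat) list \<Rightarrow> fa" where
  "fa_word u = (\<lambda>v. if v = u then 1 else 0)"

definition fa_gen :: "nat \<Rightarrow> nat \<Rightarrow> fa" where
  "fa_gen i j = fa_word [(i, j)]"

definition fa_add :: "fa \<Rightarrow> fa \<Rightarrow> fa" where
  "fa_add P Q = (\<lambda>w. P w + Q w)"

definition fa_sub :: "fa \<Rightarrow> fa \<Rightarrow> fa" where
  "fa_sub P Q = (\<lambda>w. P w - Q w)"

definition fa_smult :: "rat \<Rightarrow> fa \<Rightarrow> fa" where
  "fa_smult c P = (\<lambda>w. c * P w)"

definition fa_mult :: "fa \<Rightarrow> fa \<Rightarrow> fa" where
  "fa_mult P Q = (\<lambda>w. \<Sum>k\<in>{0..length w}. P (take k w) * Q (drop k w))"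

definition fa_lin :: "((nat \<times> nat) list \<Rightarrow> fa) \<Rightarrow> fa \<Rightarrow> fa" where
  "fa_lin f P = (\<lambda>v. \<Sum>w\<in>{w. P w \<noteq> 0}. P w * f w v)"

definition fa_homog :: "nat \<Rightarrow> fa \<Rightarrow> bool" where
  "fa_homog d P \<longleftrightarrow> (\<forall>w. P w \<noteq> 0 \<longrightarrow> length w = d)"

definition fa_hcomp :: "nat \<Rightarrow> fa \<Rightarrow> fa" where
  "fa_hcomp d P = (\<lambda>w. if length w = d then P w else 0)"

definition fk_rels :: "nat \<Rightarrow> fa set" where
  "fk_rels n =
     {fa_add (fa_gen i j) (fa_gen j i) | i j. (i, j) \<in> fk_gens n}
   \<union> {fa_mult (fa_gen i j) (fa_gen i j) | i j. (i, j) \<in> fk_gens n}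
   \<union> {fa_sub (fa_mult (fa_gen i j) (fa_gen k l)) (fa_mult (fa_gen k l) (fa_gen i j)) | i j k l.
        i \<in> {1..n} \<and> j \<in> {1..n} \<and> k \<in> {1..n} \<and> l \<in> {1..n} \<and> distinct [i, j, k, l]}
   \<union> {fa_add (fa_add (fa_mult (fa_gen i j) (fa_gen j k)) (fa_mult (fa_gen j k) (fa_gen k i)))
             (fa_mult (fa_gen k i) (fa_gen i j)) | i j k.
        i \<in> {1..n} \<and> j \<in> {1..n} \<and> k \<in> {1..n} \<and> distinct [i, j, k]}"

inductive_set fk_ideal :: "nat \<Rightarrow> fa set" for n :: nat where
  zero: "(\<lambda>_. 0) \<in> fk_ideal n"
| gen: "r \<in> fk_rels n \<Longrightarrow> set u \<subseteq> fk_gens n \<Longrightarrow> set v \<subseteq> fk_gens n \<Longrightarrow>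
        fa_mult (fa_mult (fa_word u) r) (fa_word v) \<in> fk_ideal n"
| add: "a \<in> fk_ideal n \<Longrightarrow> b \<in> fk_ideal n \<Longrightarrow> fa_add a b \<in> fk_ideal n"
| smult: "a \<in> fk_ideal n \<Longrightarrow> fa_smult c a \<in> fk_ideal n"

definition fk_cong :: "nat \<Rightarrow> fa \<Rightarrow> fa \<Rightarrow> bool" where
  "fk_cong n P Q \<longleftrightarrow> fa_sub P Q \<in> fk_ideal n"

definition tsp :: "nat \<times> nat \<Rightarrow> nat \<Rightarrow> nat" where
  "tsp g x = (if x = fst g then snd g else if x = snd g then fst g else x)"

definition gen_map :: "(nat \<Rightarrow> nat) \<Rightarrow> nat \<times> nat \<Rightarrow> nat \<times> nat" where
  "gen_map s g = (s (fst g), s (snd g))"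

fun sigma_word :: "(nat \<times> nat) list \<Rightarrow> nat \<Rightarrow> nat" where
  "sigma_word [] = id"
| "sigma_word (g # w) = tsp g \<circ> sigma_word w"

text \<open>Delta_ab(x_ij) as a scalar.\<close>
definition dgen :: "nat \<times> nat \<Rightarrow> nat \<times> nat \<Rightarrow> rat" where
  "dgen ab g = (if g = ab then 1 else if g = (snd ab, fst ab) then -1 else 0)"

text \<open>Delta_ab on words: Delta(x w) = Delta(x) w + sigma_ab(x) Delta(w).\<close>
fun delta_word :: "nat \<times> nat \<Rightarrow> (nat \<times> nat) list \<Rightarrow> fa" where
  "delta_word ab [] = (\<lambda>_. 0)"
| "delta_word ab (g # w) = (\<lambda>v. dgen ab g * fa_word w v +
      (case v of [] \<Rightarrow> 0 | h # v' \<Rightarrow> if h = gen_map (tsp ab) g then delta_word ab w v' else 0))"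

definition delta_op :: "nat \<times> nat \<Rightarrow> fa \<Rightarrow> fa" where
  "delta_op ab Q = fa_lin (delta_word ab) Q"

text \<open>nabla_ab on words (written on the right):
  (x w) nabla_ab = x (w nabla_ab) + (x nabla_{sigma_w(a) sigma_w(b)}) w.\<close>
fun nabla_word :: "nat \<times> nat \<Rightarrow> (nat \<times> nat) list \<Rightarrow> fa" where
  "nabla_word ab [] = (\<lambda>_. 0)"
| "nabla_word ab (g # w) = (\<lambda>v.
      (case v of [] \<Rightarrow> 0 | h # v' \<Rightarrow> if h = g then nabla_word ab w v' else 0)
      + dgen (gen_map (sigma_word w) ab) g * fa_word w v)"

definition nabla_op :: "nat \<times> nat \<Rightarrow> fa \<Rightarrow> fa" where
  "nabla_op ab Q = fa_lin (nabla_word ab) Q"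

fun Delta_word :: "(nat \<times> nat) list \<Rightarrow> fa \<Rightarrow> fa" where
  "Delta_word [] Q = Q"
| "Delta_word (g # w) Q = delta_op g (Delta_word w Q)"

fun Nabla_word :: "fa \<Rightarrow> (nat \<times> nat) list \<Rightarrow> fa" where
  "Nabla_word Q [] = Q"
| "Nabla_word Q (g # w) = Nabla_word (nabla_op g Q) w"

definition Delta :: "fa \<Rightarrow> fa \<Rightarrow> fa" where
  "Delta P Q = (\<lambda>v. \<Sum>w\<in>{w. P w \<noteq> 0}. P w * Delta_word w Q v)"

definition Nabla :: "fa \<Rightarrow> fa \<Rightarrow> fa" where
  "Nabla Q P = (\<lambda>v. \<Sum>w\<in>{w. P w \<noteq> 0}. P w * Nabla_word Q w v)"

definition fk_pair :: "fa \<Rightarrow> fa \<Rightarrow> rat" where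
  "fk_pair P Q = (\<Sum>d\<in>length ` {w. P w \<noteq> 0}. Delta (fa_hcomp d P) (fa_hcomp d Q) [])"

end

theory Submission
  imports Defs
begin

definition supp :: "fa \<Rightarrow> (nat \<times> nat) list set" where
  "supp X = {w. X w \<noteq> 0}"

definition fin :: "fa \<Rightarrow> bool" where "fin X \<longleftrightarrow> finite (supp X)"

definition applyf :: "((nat \<times> nat) list \<Rightarrow> rat) \<Rightarrow> fa \<Rightarrow> rat" where
  "applyf g X = (\<Sum>w\<in>{w. X w \<noteq> 0}. X w * g w)"

lemma applyf_superset:
  assumes "finite S" "supp X \<subseteq> S"
  shows "applyf g X = (\<Sum>w\<in>S. X w * g w)"
  unfolding applyf_def
  apply (rule sum.mono_neutral_left)
  using assms by (auto simp: supp_def)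

lemma applyf_nz:
  assumes "applyf g X \<noteq> 0" shows "\<exists>w. X w \<noteq> 0 \<and> g w \<noteq> 0"
proof (rule ccontr)
  assume "\<not> ?thesis"
  then have "\<forall>w\<in>{w. X w \<noteq> 0}. X w * g w = 0" by auto
  then have "applyf g X = 0" unfolding applyf_def by (rule sum.neutral)
  with assms show False by simp
qed

lemma applyf_zero_g: "(\<And>w. X w \<noteq> 0 \<Longrightarrow> g w = 0) \<Longrightarrow> applyf g X = 0"
  unfolding applyf_def by (auto intro: sum.neutral)

lemma applyf_cong: "(\<And>w. X w \<noteq> 0 \<Longrightarrow> g w = h w) \<Longrightarrow> applyf g X = applyf h X"
  unfolding applyf_def by (auto intro: sum.cong)

lemma fin_word[simp]: "fin (fa_word s)"
  unfolding fin_def supp_def fa_word_def by auto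

lemma applyf_word[simp]: "applyf g (fa_word s) = g s"
proof -
  have "{w. fa_word s w \<noteq> 0} = {s}" by (auto simp: fa_word_def)
  then show ?thesis by (simp add: applyf_def fa_word_def)
qed

lemma applyf_add:
  assumes "fin A" "fin B"
  shows "applyf g (\<lambda>y. A y + B y) = applyf g A + applyf g B"
proof -
  let ?S = "supp A \<union> supp B"
  have f: "finite ?S" using assms by (auto simp: fin_def)
  have "applyf g (\<lambda>y. A y + B y) = (\<Sum>w\<in>?S. (A w + B w) * g w)"
    by (rule applyf_superset[OF f]) (auto simp: supp_def)
  also have "\<dots> = (\<Sum>w\<in>?S. A w * g w) + (\<Sum>w\<in>?S. B w * g w)"
    by (simp add: distrib_right sum.distrib)
  also have "\<dots> = applyf g A + applyf g B"
    using applyf_superset[OF f, of A g] applyf_superset[OF f, of B g] by auto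
  finally show ?thesis .
qed

lemma applyf_smult: "applyf g (\<lambda>y. c * A y) = c * applyf g A"
proof (cases "c = 0")
  case True then show ?thesis by (simp add: applyf_def)
next
  case False
  then have "{w. c * A w \<noteq> 0} = {w. A w \<noteq> 0}" by auto
  then show ?thesis by (simp add: applyf_def sum_distrib_left mult.assoc)
qed

lemma applyf_neg: "applyf g (\<lambda>y. - A y) = - applyf g A"
  using applyf_smult[of g "-1" A] by simp

lemma applyf_zero[simp]: "applyf g (\<lambda>_. 0) = 0"
  by (simp add: applyf_def)

lemma applyf_zero_fun[simp]: "applyf (\<lambda>_. 0) X = 0"
  by (simp add: applyf_def)

lemma fin_add: "fin A \<Longrightarrow> fin B \<Longrightarrow> fin (\<lambda>y. A y + B y)"
  unfolding fin_def supp_def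
  by (rule finite_subset[of _ "{w. A w \<noteq> 0} \<union> {w. B w \<noteq> 0}"]) auto

lemma fin_smult: "fin A \<Longrightarrow> fin (\<lambda>y. c * A y)"
  unfolding fin_def supp_def
  by (rule finite_subset[of _ "{w. A w \<noteq> 0}"]) auto

lemma fin_zero[simp]: "fin (\<lambda>_. 0)"
  unfolding fin_def supp_def by simp

lemma applyf_sum_list:
  assumes "\<And>l. l \<in> set L \<Longrightarrow> fin (F l)"
  shows "applyf g (\<lambda>y. \<Sum>l\<leftarrow>L. F l y) = (\<Sum>l\<leftarrow>L. applyf g (F l))"
  and "fin (\<lambda>y. \<Sum>l\<leftarrow>L. F l y)"
  using assms
proof (induction L)
  case Nil
  { case 1 then show ?case by simp next case 2 then show ?case by simp }
next
  case (Cons a L)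
  { case 1
    have "applyf g (\<lambda>y. \<Sum>l\<leftarrow>a#L. F l y) = applyf g (\<lambda>y. F a y + (\<Sum>l\<leftarrow>L. F l y))" by simp
    also have "\<dots> = applyf g (F a) + applyf g (\<lambda>y. \<Sum>l\<leftarrow>L. F l y)"
      by (rule applyf_add) (use 1 Cons.IH in auto)
    finally show ?case using Cons.IH 1 by simp
  next
    case 2 then show ?case using Cons.IH fin_add[of "F a"] by simp }
qed

lemma applyf_sum_set:
  assumes "finite I" "\<And>i. i \<in> I \<Longrightarrow> fin (F i)"
  shows "applyf g (\<lambda>y. \<Sum>i\<in>I. F i y) = (\<Sum>i\<in>I. applyf g (F i))
       \<and> fin (\<lambda>y. \<Sum>i\<in>I. F i y)"
  using assms
proof (induction I rule: finite_induct)
  case empty then show ?case by simp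
next
  case (insert x F')
  then show ?case using applyf_add[of "F x"] fin_add[of "F x"] by simp
qed

lemma applyf_g_add: "applyf (\<lambda>w. g w + h w) X = applyf g X + applyf h X"
  by (simp add: applyf_def distrib_left sum.distrib)

lemma applyf_g_smult: "applyf (\<lambda>w. c * g w) X = c * applyf g X"
  by (simp add: applyf_def sum_distrib_left algebra_simps)

lemma applyf_g_sum_list: "applyf (\<lambda>w. \<Sum>l\<leftarrow>L. F l w) X = (\<Sum>l\<leftarrow>L. applyf (F l) X)"
  by (induction L) (simp_all add: applyf_g_add)

lemma applyf_g_sum_set: "finite I \<Longrightarrow> applyf (\<lambda>w. \<Sum>i\<in>I. F i w) X = (\<Sum>i\<in>I. applyf (F i) X)"
  by (induction I rule: finite_induct) (simp_all add: applyf_g_add)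

lemma applyf_swap:
  "applyf (\<lambda>u. applyf (\<lambda>v. h u v) Q) P = applyf (\<lambda>v. applyf (\<lambda>u. h u v) P) Q"
  unfolding applyf_def sum_distrib_left
  by (subst sum.swap) (simp add: algebra_simps)

lemma fin_lin:
  assumes "fin X" "\<And>y. fin (F y)"
  shows "fin (\<lambda>z. applyf (\<lambda>y. F y z) X)"
proof -
  have "supp (\<lambda>z. applyf (\<lambda>y. F y z) X) \<subseteq> (\<Union>y\<in>supp X. supp (F y))"
    by (auto simp: supp_def dest!: applyf_nz)
  then show ?thesis using assms unfolding fin_def by (auto intro: finite_subset)
qed

lemma applyf_comp:
  assumes "fin X" "\<And>y. fin (F y)"
  shows "applyf h (\<lambda>z. applyf (\<lambda>y. F y z) X) = applyf (\<lambda>y. applyf h (F y)) X"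
proof -
  let ?Z = "\<Union>y\<in>supp X. supp (F y)"
  have fZ: "finite ?Z" using assms by (auto simp: fin_def)
  have fX: "finite (supp X)" using assms by (simp add: fin_def)
  have "applyf h (\<lambda>z. applyf (\<lambda>y. F y z) X) = (\<Sum>z\<in>?Z. applyf (\<lambda>y. F y z) X * h z)"
    by (rule applyf_superset[OF fZ]) (auto simp: supp_def dest!: applyf_nz)
  also have "\<dots> = (\<Sum>z\<in>?Z. (\<Sum>y\<in>supp X. X y * F y z) * h z)"
    by (simp add: applyf_def supp_def)
  also have "\<dots> = (\<Sum>y\<in>supp X. X y * (\<Sum>z\<in>?Z. F y z * h z))"
    by (simp add: sum_distrib_left sum_distrib_right algebra_simps sum.swap[of _ ?Z])
  also have "\<dots> = (\<Sum>y\<in>supp X. X y * applyf h (F y))"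
  proof (rule sum.cong[OF refl])
    fix y assume "y \<in> supp X"
    then have "applyf h (F y) = (\<Sum>z\<in>?Z. F y z * h z)"
      by (intro applyf_superset[OF fZ]) auto
    then show "X y * (\<Sum>z\<in>?Z. F y z * h z) = X y * applyf h (F y)" by simp
  qed
  also have "\<dots> = applyf (\<lambda>y. applyf h (F y)) X" by (simp add: applyf_def supp_def)
  finally show ?thesis .
qed

lemma applyf_id: "fin X \<Longrightarrow> applyf (\<lambda>w. fa_word w v) X = X v"
proof -
  assume "fin X"
  show ?thesis
  proof (cases "X v = 0")
    case True
    then show ?thesis by (auto simp: applyf_def fa_word_def intro!: sum.neutral)
  next
    case False
    then have "applyf (\<lambda>w. fa_word w v) X = (\<Sum>w\<in>{v}. X w * fa_word w v)"
      unfolding applyf_def using \<open>fin X\<close>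
      by (intro sum.mono_neutral_right) (auto simp: fa_word_def fin_def supp_def)
    then show ?thesis by (simp add: fa_word_def)
  qed
qed

fun ev :: "(rat \<times> (nat \<times> nat) list) list \<Rightarrow> fa" where
  "ev [] = (\<lambda>_. 0)"
| "ev ((c, s) # L) = (\<lambda>v. c * fa_word s v + ev L v)"

fun dl :: "nat \<times> nat \<Rightarrow> (nat \<times> nat) list \<Rightarrow> (rat \<times> (nat \<times> nat) list) list" where
  "dl a [] = []"
| "dl a (g # w) = (dgen a g, w) # map (\<lambda>(c, t). (c, gen_map (tsp a) g # t)) (dl a w)"

fun nl :: "nat \<times> nat \<Rightarrow> (nat \<times> nat) list \<Rightarrow> (rat \<times> (nat \<times> nat) list) list" where
  "nl a [] = []"
| "nl a (g # w) = map (\<lambda>(c, t). (c, g # t)) (nl a w) @ [(dgen (gen_map (sigma_word w) a) g, w)]"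

lemma ev_append: "ev (L1 @ L2) = (\<lambda>v. ev L1 v + ev L2 v)"
  by (induction L1 rule: ev.induct) (auto simp: algebra_simps)

lemma ev_Cons_map: "ev (map (\<lambda>(c, t). (c, h # t)) L) v =
   (case v of [] \<Rightarrow> 0 | h' # v' \<Rightarrow> if h' = h then ev L v' else 0)"
  by (induction L rule: ev.induct) (auto simp: fa_word_def split: list.splits)

lemma delta_word_ev: "delta_word a w = ev (dl a w)"
proof (induction w)
  case Nil then show ?case by simp
next
  case (Cons g w)
  show ?case
  proof
    fix v show "delta_word a (g # w) v = ev (dl a (g # w)) v"
      using Cons by (simp add: ev_Cons_map split: list.splits)
  qed
qed

lemma nabla_word_ev: "nabla_word a w = ev (nl a w)"
proof (induction w)
  case Nil then show ?case by simp
next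
  case (Cons g w)
  show ?case
  proof
    fix v show "nabla_word a (g # w) v = ev (nl a (g # w)) v"
      using Cons by (simp add: ev_append ev_Cons_map split: list.splits)
  qed
qed

lemma fin_ev: "fin (ev L)"
  by (induction L rule: ev.induct) (auto intro!: fin_add fin_smult)

lemma applyf_ev: "applyf g (ev L) = (\<Sum>(c, s)\<leftarrow>L. c * g s)"
proof (induction L rule: ev.induct)
  case 1 then show ?case by simp
next
  case (2 c s L)
  have "applyf g (ev ((c, s) # L)) = applyf g (\<lambda>v. c * fa_word s v) + applyf g (ev L)"
    by (simp, rule applyf_add) (auto intro: fin_smult fin_ev)
  then show ?case using 2 by (simp add: applyf_smult)
qed

lemma fa_lin_applyf: "fa_lin f P = (\<lambda>v. applyf (\<lambda>w. f w v) P)"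
  by (simp add: fa_lin_def applyf_def)

lemma delta_op_word[simp]: "delta_op a (fa_word v) = delta_word a v"
  by (simp add: delta_op_def fa_lin_applyf)

lemma nabla_op_word[simp]: "nabla_op a (fa_word v) = nabla_word a v"
  by (simp add: nabla_op_def fa_lin_applyf)

lemma fin_delta_word[simp]: "fin (delta_word a w)"
  by (simp add: delta_word_ev fin_ev)

lemma fin_nabla_word[simp]: "fin (nabla_word a w)"
  by (simp add: nabla_word_ev fin_ev)

lemma DW_lin:
  "fin X \<Longrightarrow> Delta_word w X = (\<lambda>t. applyf (\<lambda>y. Delta_word w (fa_word y) t) X) \<and> fin (Delta_word w X)"
proof (induction w arbitrary: X)
  case Nil
  then show ?case by (simp add: applyf_id)
next
  case (Cons g w)
  have fD: "\<And>y. fin (Delta_word w (fa_word y))" using Cons.IH[of "fa_word _"] by simp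
  have eq: "Delta_word w X = (\<lambda>t. applyf (\<lambda>y. Delta_word w (fa_word y) t) X)"
    using Cons by blast
  have "Delta_word (g # w) X = (\<lambda>t. applyf (\<lambda>z. delta_word g z t) (Delta_word w X))"
    by (simp add: delta_op_def fa_lin_applyf)
  also have "\<dots> = (\<lambda>t. applyf (\<lambda>y. applyf (\<lambda>z. delta_word g z t) (Delta_word w (fa_word y))) X)"
    by (subst eq, rule ext, rule applyf_comp[OF Cons.prems fD])
  also have "\<dots> = (\<lambda>t. applyf (\<lambda>y. Delta_word (g # w) (fa_word y) t) X)"
    by (simp add: delta_op_def fa_lin_applyf)
  finally have e1: "Delta_word (g # w) X = (\<lambda>t. applyf (\<lambda>y. Delta_word (g # w) (fa_word y) t) X)" .
  have "fin (Delta_word (g # w) X)"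
  proof -
    have "Delta_word (g # w) X = (\<lambda>t. applyf (\<lambda>z. delta_word g z t) (Delta_word w X))"
      by (simp add: delta_op_def fa_lin_applyf)
    moreover have "fin (Delta_word w X)" using Cons by blast
    ultimately show ?thesis using fin_lin[of "Delta_word w X" "delta_word g"] by simp
  qed
  with e1 show ?case by blast
qed

lemma NW_lin:
  "fin X \<Longrightarrow> Nabla_word X w = (\<lambda>t. applyf (\<lambda>y. Nabla_word (fa_word y) w t) X) \<and> fin (Nabla_word X w)"
proof (induction w arbitrary: X)
  case Nil
  then show ?case by (simp add: applyf_id)
next
  case (Cons g w)
  have fN: "fin (nabla_op g X)"
    using fin_lin[OF Cons.prems, of "nabla_word g"] by (simp add: nabla_op_def fa_lin_applyf)
  have "Nabla_word X (g # w) = Nabla_word (nabla_op g X) w" by simp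
  also have "\<dots> = (\<lambda>t. applyf (\<lambda>z. Nabla_word (fa_word z) w t) (nabla_op g X))"
    using Cons.IH[OF fN] by blast
  also have "\<dots> = (\<lambda>t. applyf (\<lambda>y. applyf (\<lambda>z. Nabla_word (fa_word z) w t) (nabla_word g y)) X)"
    by (rule ext, simp only: nabla_op_def fa_lin_applyf, rule applyf_comp[OF Cons.prems]) simp
  also have "\<dots> = (\<lambda>t. applyf (\<lambda>y. Nabla_word (fa_word y) (g # w) t) X)"
    using Cons.IH[of "nabla_word g _"] by simp
  finally have e: "Nabla_word X (g # w) = (\<lambda>t. applyf (\<lambda>y. Nabla_word (fa_word y) (g # w) t) X)" .
  moreover have "fin (Nabla_word X (g # w))" using Cons.IH[OF fN] Nabla_word.simps(2) by metis
  ultimately show ?case by blast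
qed

lemma Delta_word_append: "Delta_word (u @ w) X = Delta_word u (Delta_word w X)"
  by (induction u) auto

lemma Nabla_word_append: "Nabla_word X (u @ w) = Nabla_word (Nabla_word X u) w"
  by (induction u arbitrary: X) auto

definition B :: "(nat \<times> nat) list \<Rightarrow> (nat \<times> nat) list \<Rightarrow> rat" where
  "B u v = Delta_word u (fa_word v) []"

lemma B_snoc: "B (w @ [a]) v = (\<Sum>(c, t)\<leftarrow>dl a v. c * B w t)"
proof -
  have "B (w @ [a]) v = Delta_word w (ev (dl a v)) []"
    by (simp add: B_def Delta_word_append delta_word_ev)
  also have "\<dots> = applyf (\<lambda>y. B w y) (ev (dl a v))"
    using DW_lin[OF fin_ev, of w "dl a v"] by (simp add: B_def)
  finally show ?thesis by (simp add: applyf_ev)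
qed

lemma B_Nil: "B [] v = (if v = [] then 1 else 0)"
  by (auto simp: B_def fa_word_def)

lemma B_Nil2: "B u [] = (if u = [] then 1 else 0)"
  by (cases u rule: rev_exhaust) (auto simp: B_Nil B_snoc)

lemma tsp_inv[simp]: "tsp a (tsp a x) = x"
  by (cases a) (auto simp: tsp_def)

lemma gm_inv[simp]: "gen_map (tsp a) (gen_map (tsp a) g) = g"
  by (simp add: gen_map_def)

lemma smap_inv[simp]: "map (gen_map (tsp a)) (map (gen_map (tsp a)) v) = v"
  by (induction v) auto

lemma tsp_inj: "tsp c x = tsp c y \<Longrightarrow> x = y"
  by (metis tsp_inv)

lemma gm_inj: "gen_map (tsp c) x = gen_map (tsp c) y \<Longrightarrow> x = y"
  by (metis gm_inv)

lemma dgen_sym: "dgen a b = dgen b a"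
  by (cases a; cases b) (auto simp: dgen_def)

lemma dgen_nz_tsp: "dgen a b \<noteq> 0 \<Longrightarrow> tsp a = tsp b"
  by (cases a; cases b) (auto simp: dgen_def tsp_def split: if_splits intro!: ext)

lemma dgen_inv: "dgen (gen_map (tsp c) a) (gen_map (tsp c) g) = dgen a g"
proof -
  have 1: "(gen_map (tsp c) g = gen_map (tsp c) a) = (g = a)" using gm_inj by blast
  have 2: "(gen_map (tsp c) g = (snd (gen_map (tsp c) a), fst (gen_map (tsp c) a))) = (g = (snd a, fst a))"
    by (cases g; cases a) (auto simp: gen_map_def dest: tsp_inj[of c])
  show ?thesis unfolding dgen_def using 1 2 by simp
qed

lemma tsp_conj: "tsp (gen_map (tsp c) a) (tsp c z) = tsp c (tsp a z)"
proof -
  have i: "\<And>p q. (tsp c p = tsp c q) = (p = q)" using tsp_inj by blast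
  show ?thesis by (cases a) (simp add: tsp_def gen_map_def i)
qed

lemma tsp_conj': "tsp (tsp c (fst a), tsp c (snd a)) (tsp c z) = tsp c (tsp a z)"
  using tsp_conj[of c a z] by (simp add: gen_map_def)

lemma gm_conj: "gen_map (tsp (gen_map (tsp c) a)) (gen_map (tsp c) g) = gen_map (tsp c) (gen_map (tsp a) g)"
  by (simp add: gen_map_def tsp_conj')

lemma gm_comp_inv[simp]: "gen_map (tsp a) \<circ> gen_map (tsp a) = id"
  by (rule ext) simp

lemma dl_sigma: "dl (gen_map (tsp c) a) (map (gen_map (tsp c)) v) =
   map (\<lambda>(x, t). (x, map (gen_map (tsp c)) t)) (dl a v)"
  by (induction v) (auto simp: dgen_inv gm_conj split_def)

lemma B_inv: "B (map (gen_map (tsp c)) u) (map (gen_map (tsp c)) v) = B u v"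
proof (induction u arbitrary: v rule: rev_induct)
  case Nil
  then show ?case by (simp add: B_Nil)
next
  case (snoc a w)
  have "B (map (gen_map (tsp c)) (w @ [a])) (map (gen_map (tsp c)) v)
      = (\<Sum>(x, t)\<leftarrow>dl (gen_map (tsp c) a) (map (gen_map (tsp c)) v). x * B (map (gen_map (tsp c)) w) t)"
    by (simp add: B_snoc)
  also have "\<dots> = (\<Sum>(x, t)\<leftarrow>dl a v. x * B (map (gen_map (tsp c)) w) (map (gen_map (tsp c)) t))"
    by (simp add: dl_sigma comp_def split_def)
  also have "\<dots> = B (w @ [a]) v" using snoc by (simp add: B_snoc)
  finally show ?case .
qed

lemma dl_snoc: "dl a (v @ [b]) = map (\<lambda>(c, t). (c, t @ [b])) (dl a v) @ [(dgen a b, map (gen_map (tsp a)) v)]"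
  by (induction v) (auto simp: split_def)

lemma sum_list_swap: "(\<Sum>x\<leftarrow>xs. \<Sum>y\<leftarrow>ys. f x y) = (\<Sum>y\<leftarrow>ys. \<Sum>x\<leftarrow>xs. (f x y :: 'c::comm_monoid_add))"
proof (induction xs)
  case Nil then show ?case by simp
next
  case (Cons a xs)
  then show ?case using sum_list_addf[of "f a" "\<lambda>y. \<Sum>x\<leftarrow>xs. f x y" ys] by simp
qed

lemma last_terms: "dgen a b * B w (map (gen_map (tsp a)) v) = dgen b a * B (map (gen_map (tsp b)) w) v"
proof (cases "dgen a b = 0")
  case True then show ?thesis by (simp add: dgen_sym)
next
  case False
  then have "tsp a = tsp b" by (rule dgen_nz_tsp)
  then have "B w (map (gen_map (tsp a)) v) = B (map (gen_map (tsp b)) w) v"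
    using B_inv[of a w "map (gen_map (tsp a)) v"] by simp
  then show ?thesis by (simp add: dgen_sym)
qed

lemma B_K: "B u (v @ [b]) = (\<Sum>(c, t)\<leftarrow>dl b u. c * B t v)"
proof (induction u arbitrary: v rule: rev_induct)
  case Nil
  then show ?case by (simp add: B_Nil)
next
  case (snoc a w)
  have "B (w @ [a]) (v @ [b]) = (\<Sum>(c, t)\<leftarrow>dl a v. c * B w (t @ [b])) + dgen a b * B w (map (gen_map (tsp a)) v)"
    by (simp add: B_snoc dl_snoc comp_def split_def)
  also have "(\<Sum>(c, t)\<leftarrow>dl a v. c * B w (t @ [b])) = (\<Sum>x\<leftarrow>dl a v. \<Sum>y\<leftarrow>dl b w. fst x * fst y * B (snd y) (snd x))"
    by (simp add: snoc split_def sum_list_const_mult mult.assoc)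
  also have "\<dots> = (\<Sum>y\<leftarrow>dl b w. \<Sum>x\<leftarrow>dl a v. fst x * fst y * B (snd y) (snd x))"
    by (rule sum_list_swap)
  also have "\<dots> = (\<Sum>(c, t)\<leftarrow>dl b w. c * B (t @ [a]) v)"
    by (simp add: B_snoc split_def sum_list_const_mult algebra_simps)
  finally show ?case
    by (simp add: dl_snoc last_terms comp_def split_def)
qed

lemma B_sym: "B u v = B v u"
proof (induction v arbitrary: u rule: rev_induct)
  case Nil
  then show ?case by (simp add: B_Nil B_Nil2)
next
  case (snoc b v)
  show ?case by (simp add: B_K B_snoc snoc)
qed

lemma gen_map_id[simp]: "gen_map id g = g"
  by (simp add: gen_map_def)

lemma sigma_word_snoc: "sigma_word (w @ [a]) = sigma_word w \<circ> tsp a"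
  by (induction w) auto

lemma nl_snoc_sum: "(\<Sum>x\<leftarrow>nl g (w @ [a]). (f x :: 'c::comm_monoid_add)) =
   (\<Sum>(c, t)\<leftarrow>nl (gen_map (tsp a) g) w. f (c, t @ [a])) + f (dgen g a, w)"
proof (induction w arbitrary: f)
  case Nil
  then show ?case by simp
next
  case (Cons h w)
  have "(\<Sum>x\<leftarrow>nl g ((h # w) @ [a]). f x) =
      (\<Sum>x\<leftarrow>nl g (w @ [a]). f (case x of (c, t) \<Rightarrow> (c, h # t)))
      + f (dgen (gen_map (sigma_word (w @ [a])) g) h, w @ [a])"
    by (simp add: comp_def)
  also have "\<dots> = (\<Sum>(c, t)\<leftarrow>nl (gen_map (tsp a) g) w. f (c, h # t @ [a]))
      + f (dgen (gen_map (sigma_word w) (gen_map (tsp a) g)) h, w @ [a]) + f (dgen g a, h # w)"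
    by (simp add: Cons sigma_word_snoc gen_map_def add_ac)
  also have "\<dots> = (\<Sum>(c, t)\<leftarrow>nl (gen_map (tsp a) g) (h # w). f (c, t @ [a])) + f (dgen g a, h # w)"
    by (simp add: comp_def split_def)
  finally show ?case .
qed

lemma B_K2: "B u (g # v) = (\<Sum>(c, t)\<leftarrow>nl g u. c * B t v)"
proof (induction u arbitrary: g v rule: rev_induct)
  case Nil
  then show ?case by (simp add: B_Nil)
next
  case (snoc a w)
  have "B (w @ [a]) (g # v) = dgen a g * B w v + (\<Sum>(c, t)\<leftarrow>dl a v. c * B w (gen_map (tsp a) g # t))"
    by (simp add: B_snoc comp_def split_def)
  also have "(\<Sum>(c, t)\<leftarrow>dl a v. c * B w (gen_map (tsp a) g # t)) =
     (\<Sum>x\<leftarrow>dl a v. \<Sum>y\<leftarrow>nl (gen_map (tsp a) g) w. fst x * fst y * B (snd y) (snd x))"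
    by (simp add: snoc split_def sum_list_const_mult mult.assoc)
  also have "\<dots> = (\<Sum>y\<leftarrow>nl (gen_map (tsp a) g) w. \<Sum>x\<leftarrow>dl a v. fst x * fst y * B (snd y) (snd x))"
    by (rule sum_list_swap)
  also have "\<dots> = (\<Sum>(c, t)\<leftarrow>nl (gen_map (tsp a) g) w. c * B (t @ [a]) v)"
    by (simp add: B_snoc split_def sum_list_const_mult algebra_simps)
  finally show ?case
    by (simp add: nl_snoc_sum[where f = "\<lambda>(c, t). c * B t v"] dgen_sym algebra_simps)
qed

lemma N_eq: "Nabla_word (fa_word u) v [] = B u v"
proof (induction v arbitrary: u)
  case Nil
  then show ?case by (auto simp: fa_word_def B_Nil2)
next
  case (Cons g w)
  have "Nabla_word (fa_word u) (g # w) [] = Nabla_word (ev (nl g u)) w []"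
    by (simp add: nabla_word_ev)
  also have "\<dots> = applyf (\<lambda>y. Nabla_word (fa_word y) w []) (ev (nl g u))"
    using NW_lin[OF fin_ev, of "nl g u" w] by metis
  also have "\<dots> = B u (g # w)" by (simp add: applyf_ev Cons B_K2)
  finally show ?case .
qed

lemma ev_nz: "ev L v \<noteq> 0 \<Longrightarrow> \<exists>c. (c, v) \<in> set L"
  by (induction L rule: ev.induct) (auto simp: fa_word_def split: if_splits)

lemma dl_len: "(c, t) \<in> set (dl g z) \<Longrightarrow> length t + 1 = length z"
  by (induction z arbitrary: c t) auto

lemma nl_len: "(c, t) \<in> set (nl g z) \<Longrightarrow> length t + 1 = length z"
  by (induction z arbitrary: c t) auto

lemma delta_word_len: assumes "delta_word g z v \<noteq> 0" shows "length v + 1 = length z"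
proof -
  from assms ev_nz[of "dl g z" v] obtain c where "(c, v) \<in> set (dl g z)" by (auto simp: delta_word_ev)
  then show ?thesis by (rule dl_len)
qed

lemma nabla_word_len: assumes "nabla_word g z v \<noteq> 0" shows "length v + 1 = length z"
proof -
  from assms ev_nz[of "nl g z" v] obtain c where "(c, v) \<in> set (nl g z)" by (auto simp: nabla_word_ev)
  then show ?thesis by (rule nl_len)
qed

lemma Delta_word_deg: "Delta_word w X v \<noteq> 0 \<Longrightarrow> \<exists>z. X z \<noteq> 0 \<and> length v + length w = length z"
proof (induction w arbitrary: v)
  case Nil then show ?case by auto
next
  case (Cons g w)
  then have "applyf (\<lambda>z. delta_word g z v) (Delta_word w X) \<noteq> 0"
    by (simp add: delta_op_def fa_lin_applyf)
  then obtain z where "Delta_word w X z \<noteq> 0" "delta_word g z v \<noteq> 0" by (auto dest: applyf_nz)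
  then show ?case using Cons.IH delta_word_len by fastforce
qed

lemma Nabla_word_deg: "Nabla_word X w v \<noteq> 0 \<Longrightarrow> \<exists>z. X z \<noteq> 0 \<and> length v + length w = length z"
proof (induction w arbitrary: X v)
  case Nil then show ?case by auto
next
  case (Cons g w)
  then obtain z where z: "nabla_op g X z \<noteq> 0" "length v + length w = length z" by fastforce
  then have "applyf (\<lambda>y. nabla_word g y z) X \<noteq> 0" by (simp add: nabla_op_def fa_lin_applyf)
  then obtain y where "X y \<noteq> 0" "nabla_word g y z \<noteq> 0" by (auto dest: applyf_nz)
  then show ?case using z nabla_word_len by fastforce
qed

lemma B_deg: "B u v \<noteq> 0 \<Longrightarrow> length u = length v"
  using Delta_word_deg[of u "fa_word v" "[]"] by (auto simp: B_def fa_word_def split: if_splits)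

definition pre :: "nat \<times> nat \<Rightarrow> fa \<Rightarrow> fa" where
  "pre h Z = (\<lambda>v. case v of [] \<Rightarrow> 0 | h' # v' \<Rightarrow> if h' = h then Z v' else 0)"

lemma pre_zero[simp]: "pre h (\<lambda>_. 0) = (\<lambda>_. 0)"
  by (auto simp: pre_def split: list.splits)

lemma pre_add: "pre h (\<lambda>v. A v + E2 v) = (\<lambda>v. pre h A v + pre h E2 v)"
  by (auto simp: pre_def split: list.splits)

lemma pre_lin: "fin Z \<Longrightarrow> pre h Z = (\<lambda>v. applyf (\<lambda>w. fa_word (h # w) v) Z)"
proof (rule ext)
  fix v assume fZ: "fin Z"
  show "pre h Z v = applyf (\<lambda>w. fa_word (h # w) v) Z"
  proof (cases v)
    case Nil then show ?thesis by (simp add: pre_def fa_word_def)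
  next
    case (Cons h' v')
    show ?thesis
    proof (cases "h' = h")
      case True
      have "applyf (\<lambda>w. fa_word (h # w) v) Z = applyf (\<lambda>w. fa_word w v') Z"
        by (rule applyf_cong) (auto simp: fa_word_def Cons True)
      then show ?thesis using applyf_id[OF fZ] by (simp add: pre_def Cons True)
    next
      case False
      then show ?thesis by (simp add: pre_def Cons fa_word_def)
    qed
  qed
qed

lemma fin_pre: "fin Z \<Longrightarrow> fin (pre h Z)"
  using fin_lin[of Z "\<lambda>w. fa_word (h # w)"] by (simp add: pre_lin)

lemma delta_word_Cons_fun: "delta_word y (g # w) = (\<lambda>v. dgen y g * fa_word w v + pre (gen_map (tsp y) g) (delta_word y w) v)"
  by (auto simp: pre_def split: list.splits)

lemma fin_delta_op: "fin Z \<Longrightarrow> fin (delta_op x Z)"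
  using fin_lin[of Z "delta_word x"] by (simp add: delta_op_def fa_lin_applyf)

lemma delta_op_pre: "fin Z \<Longrightarrow> delta_op x (pre h Z) = (\<lambda>v. dgen x h * Z v + pre (gen_map (tsp x) h) (delta_op x Z) v)"
proof (rule ext)
  fix v assume fZ: "fin Z"
  have "delta_op x (pre h Z) v = applyf (\<lambda>z. delta_word x z v) (\<lambda>v'. applyf (\<lambda>w. fa_word (h # w) v') Z)"
    by (simp add: delta_op_def fa_lin_applyf pre_lin[OF fZ])
  also have "\<dots> = applyf (\<lambda>w. delta_word x (h # w) v) Z"
    by (subst applyf_comp[OF fZ]) simp_all
  also have "\<dots> = applyf (\<lambda>w. dgen x h * fa_word w v) Z + applyf (\<lambda>w. pre (gen_map (tsp x) h) (delta_word x w) v) Z"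
    by (simp only: delta_word_Cons_fun applyf_g_add)
  also have "applyf (\<lambda>w. dgen x h * fa_word w v) Z = dgen x h * Z v"
    by (simp add: applyf_g_smult applyf_id[OF fZ])
  also have "applyf (\<lambda>w. pre (gen_map (tsp x) h) (delta_word x w) v) Z = pre (gen_map (tsp x) h) (delta_op x Z) v"
    by (auto simp: pre_def delta_op_def fa_lin_applyf split: list.splits)
  finally show "delta_op x (pre h Z) v = dgen x h * Z v + pre (gen_map (tsp x) h) (delta_op x Z) v" .
qed

lemma delta_op_add: "fin A \<Longrightarrow> fin C \<Longrightarrow> delta_op x (\<lambda>v. A v + C v) = (\<lambda>v. delta_op x A v + delta_op x C v)"
  by (simp add: delta_op_def fa_lin_applyf applyf_add)

lemma delta_op_smult: "delta_op x (\<lambda>v. c * A v) = (\<lambda>v. c * delta_op x A v)"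
  by (simp add: delta_op_def fa_lin_applyf applyf_smult)

definition D2 where "D2 x y q = delta_op x (delta_word y q)"

lemma D2_Cons: "D2 x y (g # w) = (\<lambda>v. dgen y g * delta_word x w v + dgen x (gen_map (tsp y) g) * delta_word y w v
    + pre (gen_map (tsp x) (gen_map (tsp y) g)) (D2 x y w) v)"
proof -
  have "D2 x y (g # w) = delta_op x (\<lambda>v. dgen y g * fa_word w v + pre (gen_map (tsp y) g) (delta_word y w) v)"
    by (simp only: D2_def delta_word_Cons_fun)
  also have "\<dots> = (\<lambda>v. delta_op x (\<lambda>v. dgen y g * fa_word w v) v + delta_op x (pre (gen_map (tsp y) g) (delta_word y w)) v)"
    by (rule delta_op_add) (auto intro: fin_smult fin_pre)
  also have "\<dots> = (\<lambda>v. dgen y g * delta_word x w v + dgen x (gen_map (tsp y) g) * delta_word y w v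
    + pre (gen_map (tsp x) (gen_map (tsp y) g)) (D2 x y w) v)"
    by (simp add: delta_op_smult delta_op_pre D2_def algebra_simps)
  finally show ?thesis .
qed

lemma dgen_swap: "fst a \<noteq> snd a \<Longrightarrow> dgen (snd a, fst a) g = - dgen a g"
  by (cases a) (auto simp: dgen_def)

lemma dgen_sig: "dgen c (gen_map (tsp a) g) = dgen (gen_map (tsp a) c) g"
  using dgen_inv[of a c "gen_map (tsp a) g"] by simp

lemma tsp_swap: "tsp (b, a) = tsp (a, b)"
  by (auto simp: tsp_def intro!: ext)

lemma rel1: "i \<noteq> j \<Longrightarrow> delta_word (i, j) q v + delta_word (j, i) q v = 0"
proof (induction q arbitrary: v)
  case Nil then show ?case by simp
next
  case (Cons g w)
  have "dgen (j, i) g = - dgen (i, j) g" using dgen_swap[of "(i,j)"] Cons.prems by simp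
  then show ?case using Cons by (auto simp: tsp_swap split: list.splits)
qed

lemma rel2: "fst a \<noteq> snd a \<Longrightarrow> D2 a a q = (\<lambda>_. 0)"
proof (induction q)
  case Nil then show ?case by (simp add: D2_def delta_op_def fa_lin_applyf)
next
  case (Cons g w)
  have "dgen a (gen_map (tsp a) g) = - dgen a g"
    using Cons.prems by (cases a) (auto simp: dgen_def gen_map_def tsp_def prod_eq_iff split: if_splits)
  then show ?case using Cons by (simp add: D2_Cons)
qed

lemma rel3:
  assumes "distinct [i, j, k, l]"
  shows "D2 (i, j) (k, l) q = D2 (k, l) (i, j) q"
proof (induction q)
  case Nil then show ?case by (simp add: D2_def delta_op_def fa_lin_applyf)
next
  case (Cons g w)
  have c1: "gen_map (tsp (i, j)) (k, l) = (k, l)" "gen_map (tsp (k, l)) (i, j) = (i, j)"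
    using assms by (auto simp: gen_map_def tsp_def)
  have t: "tsp (i, j) (tsp (k, l) x) = tsp (k, l) (tsp (i, j) x)" for x
    using assms by (auto simp: tsp_def)
  have c2: "gen_map (tsp (i, j)) (gen_map (tsp (k, l)) g) = gen_map (tsp (k, l)) (gen_map (tsp (i, j)) g)"
    by (simp add: gen_map_def t)
  show ?case using Cons by (simp add: D2_Cons dgen_sig c1 c2 algebra_simps)
qed

lemma rel4:
  assumes "distinct [i, j, k]"
  shows "(\<lambda>v. D2 (i, j) (j, k) q v + D2 (j, k) (k, i) q v + D2 (k, i) (i, j) q v) = (\<lambda>_. 0)"
proof (induction q)
  case Nil then show ?case by (simp add: D2_def delta_op_def fa_lin_applyf)
next
  case (Cons g w)
  have s1: "gen_map (tsp (i, j)) (k, i) = (k, j)" "gen_map (tsp (j, k)) (i, j) = (i, k)"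
    "gen_map (tsp (k, i)) (j, k) = (j, i)"
    using assms by (auto simp: gen_map_def tsp_def)
  have d: "dgen (k, j) g = - dgen (j, k) g" "dgen (i, k) g = - dgen (k, i) g" "dgen (j, i) g = - dgen (i, j) g"
    using assms dgen_swap[of "(j,k)"] dgen_swap[of "(k,i)"] dgen_swap[of "(i,j)"] by auto
  have t1: "tsp (i, j) (tsp (j, k) x) = tsp (j, k) (tsp (k, i) x)" for x
    using assms by (auto simp: tsp_def)
  have t2: "tsp (k, i) (tsp (i, j) x) = tsp (j, k) (tsp (k, i) x)" for x
    using assms by (auto simp: tsp_def)
  have e1: "gen_map (tsp (i, j)) (gen_map (tsp (j, k)) g) = gen_map (tsp (j, k)) (gen_map (tsp (k, i)) g)"
    by (simp add: gen_map_def t1)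
  have e2: "gen_map (tsp (k, i)) (gen_map (tsp (i, j)) g) = gen_map (tsp (j, k)) (gen_map (tsp (k, i)) g)"
    by (simp add: gen_map_def t2)
  have z1: "dgen (j, k) g + dgen (k, i) (gen_map (tsp (i, j)) g) = 0"
    by (simp add: dgen_sig s1 d)
  have z2: "dgen (i, j) (gen_map (tsp (j, k)) g) + dgen (k, i) g = 0"
    by (simp add: dgen_sig s1 d)
  have z3: "dgen (j, k) (gen_map (tsp (k, i)) g) + dgen (i, j) g = 0"
    by (simp add: dgen_sig s1 d)
  let ?h = "gen_map (tsp (j, k)) (gen_map (tsp (k, i)) g)"
  show ?case
  proof (rule ext)
    fix v
    have "D2 (i, j) (j, k) (g # w) v + D2 (j, k) (k, i) (g # w) v + D2 (k, i) (i, j) (g # w) v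
      = (dgen (j, k) g + dgen (k, i) (gen_map (tsp (i, j)) g)) * delta_word (i, j) w v
      + (dgen (i, j) (gen_map (tsp (j, k)) g) + dgen (k, i) g) * delta_word (j, k) w v
      + (dgen (j, k) (gen_map (tsp (k, i)) g) + dgen (i, j) g) * delta_word (k, i) w v
      + (pre ?h (D2 (i, j) (j, k) w) v + pre ?h (D2 (j, k) (k, i) w) v + pre ?h (D2 (k, i) (i, j) w) v)"
      by (simp only: D2_Cons e1 e2) (simp add: algebra_simps)
    also have "pre ?h (D2 (i, j) (j, k) w) v + pre ?h (D2 (j, k) (k, i) w) v + pre ?h (D2 (k, i) (i, j) w) v
        = pre ?h (\<lambda>v. D2 (i, j) (j, k) w v + D2 (j, k) (k, i) w v + D2 (k, i) (i, j) w v) v"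
      by (simp add: pre_def split: list.splits)
    also have "\<dots> = 0" using Cons by simp
    finally show "D2 (i, j) (j, k) (g # w) v + D2 (j, k) (k, i) (g # w) v + D2 (k, i) (i, j) (g # w) v = 0"
      by (simp add: z1 z2 z3)
  qed
qed

lemma fa_word_prefix:
  "fa_word (s @ t) w = (if s = take (length s) w \<and> length s \<le> length w then fa_word t (drop (length s) w) else 0)"
  by (auto simp: fa_word_def) (metis append_take_drop_id)

lemma fa_mult_lin:
  assumes fX: "fin X" and fY: "fin Y"
  shows "fa_mult X Y w = applyf (\<lambda>s. applyf (\<lambda>t. fa_word (s @ t) w) Y) X"
proof -
  define P where "P = (\<lambda>k. take k w) ` {0..length w}"
  have inner: "applyf (\<lambda>t. fa_word (s @ t) w) Y = (if s \<in> P then Y (drop (length s) w) else 0)" for s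
  proof -
    have c: "(s = take (length s) w \<and> length s \<le> length w) = (s \<in> P)"
      by (auto simp: P_def)
    show ?thesis
      by (simp only: fa_word_prefix c) (auto simp: applyf_id[OF fY])
  qed
  let ?S = "supp X \<union> P"
  have fS: "finite ?S" using fX by (auto simp: fin_def P_def)
  have "applyf (\<lambda>s. applyf (\<lambda>t. fa_word (s @ t) w) Y) X = (\<Sum>s\<in>?S. X s * (if s \<in> P then Y (drop (length s) w) else 0))"
    by (simp only: inner, rule applyf_superset[OF fS]) auto
  also have "\<dots> = (\<Sum>s\<in>P. X s * Y (drop (length s) w))"
    by (rule sum.mono_neutral_cong_right) (use fS in auto)
  also have "\<dots> = (\<Sum>k\<in>{0..length w}. X (take k w) * Y (drop k w))"
  proof -
    have inj: "inj_on (\<lambda>k. take k w) {0..length w}"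
    proof (rule inj_onI)
      fix k k' assume "k \<in> {0..length w}" "k' \<in> {0..length w}" "take k w = take k' w"
      then have "length (take k w) = length (take k' w)" by simp
      with \<open>k \<in> {0..length w}\<close> \<open>k' \<in> {0..length w}\<close> show "k = k'" by simp
    qed
    show ?thesis unfolding P_def
      by (subst sum.reindex[OF inj]) (auto intro!: sum.cong simp: min_def)
  qed
  finally show ?thesis by (simp add: fa_mult_def)
qed

lemma fin_mult: "fin X \<Longrightarrow> fin Y \<Longrightarrow> fin (fa_mult X Y)"
proof -
  assume fX: "fin X" and fY: "fin Y"
  have eq: "fa_mult X Y = (\<lambda>w. applyf (\<lambda>s. applyf (\<lambda>t. fa_word (s @ t) w) Y) X)"
    using fa_mult_lin[OF fX fY] by auto
  have F: "fin (\<lambda>w. applyf (\<lambda>t. fa_word (s @ t) w) Y)" for s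
    using fin_lin[OF fY, of "\<lambda>t. fa_word (s @ t)"] by simp
  have "fin (\<lambda>w. applyf (\<lambda>s. applyf (\<lambda>t. fa_word (s @ t) w) Y) X)"
    using fin_lin[OF fX, of "\<lambda>s w. applyf (\<lambda>t. fa_word (s @ t) w) Y"] F by simp
  then show ?thesis by (simp only: eq)
qed

lemma applyf_mult:
  assumes fX: "fin X" and fY: "fin Y"
  shows "applyf g (fa_mult X Y) = applyf (\<lambda>s. applyf (\<lambda>t. g (s @ t)) Y) X"
proof -
  have fF: "fin (\<lambda>w. applyf (\<lambda>t. fa_word (s @ t) w) Y)" for s
    using fin_lin[OF fY, of "\<lambda>t. fa_word (s @ t)"] by simp
  have "applyf g (fa_mult X Y) = applyf g (\<lambda>w. applyf (\<lambda>s. (\<lambda>w. applyf (\<lambda>t. fa_word (s @ t) w) Y) w) X)"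
    by (rule arg_cong[where f="applyf g"]) (rule ext, rule fa_mult_lin[OF fX fY])
  also have "\<dots> = applyf (\<lambda>s. applyf g (\<lambda>w. applyf (\<lambda>t. fa_word (s @ t) w) Y)) X"
    by (rule applyf_comp[OF fX fF])
  also have "\<dots> = applyf (\<lambda>s. applyf (\<lambda>t. g (s @ t)) Y) X"
    by (subst applyf_comp[OF fY]) simp_all
  finally show ?thesis .
qed

lemma fa_mult_word: "fa_mult (fa_word s) (fa_word t) = fa_word (s @ t)"
  by (rule ext) (simp add: fa_mult_lin)

definition bf :: "fa \<Rightarrow> fa \<Rightarrow> rat" where
  "bf P Q = applyf (\<lambda>u. applyf (B u) Q) P"

lemma bf_sym: "bf P Q = bf Q P"
  unfolding bf_def by (subst applyf_swap) (simp add: B_sym)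

lemma B_fun: "B u = (\<lambda>v. Delta_word u (fa_word v) [])"
  by (rule ext) (simp add: B_def)

lemma B_lin: "fin Z \<Longrightarrow> Delta_word u Z [] = applyf (B u) Z"
proof -
  assume fZ: "fin Z"
  have "Delta_word u Z = (\<lambda>t. applyf (\<lambda>y. Delta_word u (fa_word y) t) Z)" using DW_lin[OF fZ] by blast
  then show ?thesis by (simp add: B_fun)
qed

lemma B_append3: "B (u @ t @ v) q = applyf (\<lambda>y. applyf (B u) (Delta_word t (fa_word y))) (Delta_word v (fa_word q))"
proof -
  let ?X = "Delta_word v (fa_word q)"
  have fX: "fin ?X" using DW_lin[of "fa_word q" v] by simp
  have fD: "\<And>y. fin (Delta_word t (fa_word y))" using DW_lin[of "fa_word _" t] by simp
  have "B (u @ t @ v) q = Delta_word u (Delta_word t ?X) []"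
    by (simp add: B_def Delta_word_append)
  also have "\<dots> = applyf (B u) (Delta_word t ?X)"
    using DW_lin[OF fX, of t] by (intro B_lin) blast
  also have "\<dots> = applyf (B u) (\<lambda>z. applyf (\<lambda>y. Delta_word t (fa_word y) z) ?X)"
    using DW_lin[OF fX, of t] by metis
  also have "\<dots> = applyf (\<lambda>y. applyf (B u) (Delta_word t (fa_word y))) ?X"
    by (rule applyf_comp[OF fX fD])
  finally show ?thesis .
qed

lemma rad_lemma:
  assumes H: "\<And>q z. (\<Sum>(c, t)\<leftarrow>L. c * Delta_word t (fa_word q) z) = 0"
  shows "(\<Sum>(c, t)\<leftarrow>L. c * B (u @ t @ v) q) = 0"
proof -
  let ?X = "Delta_word v (fa_word q)"
  have fD: "\<And>y t. fin (Delta_word t (fa_word y))" using DW_lin[of "fa_word _"] by simp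
  have "(\<Sum>(c, t)\<leftarrow>L. c * B (u @ t @ v) q) =
        (\<Sum>(c, t)\<leftarrow>L. applyf (\<lambda>y. c * applyf (B u) (Delta_word t (fa_word y))) ?X)"
    by (simp add: B_append3 applyf_g_smult)
  also have "\<dots> = applyf (\<lambda>y. \<Sum>(c, t)\<leftarrow>L. c * applyf (B u) (Delta_word t (fa_word y))) ?X"
    using applyf_g_sum_list[of "\<lambda>l y. fst l * applyf (B u) (Delta_word (snd l) (fa_word y))" L ?X]
    by (simp add: split_def)
  also have "\<dots> = applyf (\<lambda>y. applyf (B u) (\<lambda>z. \<Sum>(c, t)\<leftarrow>L. c * Delta_word t (fa_word y) z)) ?X"
  proof -
    have "applyf (B u) (\<lambda>z. \<Sum>(c, t)\<leftarrow>L. c * Delta_word t (fa_word y) z)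
       = (\<Sum>(c, t)\<leftarrow>L. c * applyf (B u) (Delta_word t (fa_word y)))" for y
      using applyf_sum_list(1)[of L "\<lambda>l z. fst l * Delta_word (snd l) (fa_word y) z" "B u"]
      by (simp add: split_def fin_smult fD applyf_smult)
    then show ?thesis by simp
  qed
  also have "\<dots> = 0" by (simp add: H)
  finally show ?thesis .
qed

lemma bf_gen:
  assumes fr: "fin r" and fQ: "fin Q"
  shows "bf (fa_mult (fa_mult (fa_word u) r) (fa_word v)) Q = applyf (\<lambda>t. applyf (B (u @ t @ v)) Q) r"
  unfolding bf_def
  by (simp add: applyf_mult fin_mult fr)

lemma applyf_ev_B:
  assumes H: "\<And>q z. (\<Sum>(c, t)\<leftarrow>L. c * Delta_word t (fa_word q) z) = 0"
  shows "applyf (\<lambda>t. applyf (B (u @ t @ v)) Q) (ev L) = 0"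
proof -
  have "applyf (\<lambda>t. applyf (B (u @ t @ v)) Q) (ev L) = (\<Sum>(c, t)\<leftarrow>L. c * applyf (B (u @ t @ v)) Q)"
    by (simp add: applyf_ev)
  also have "\<dots> = applyf (\<lambda>q. \<Sum>(c, t)\<leftarrow>L. c * B (u @ t @ v) q) Q"
    using applyf_g_sum_list[of "\<lambda>l q. fst l * B (u @ snd l @ v) q" L Q]
    by (simp add: split_def applyf_g_smult)
  also have "\<dots> = 0" by (simp add: rad_lemma[OF H])
  finally show ?thesis .
qed

definition relH :: "(rat \<times> (nat \<times> nat) list) list \<Rightarrow> bool" where
  "relH L \<longleftrightarrow> (\<forall>q z. (\<Sum>(c, t)\<leftarrow>L. c * Delta_word t (fa_word q) z) = 0)"

lemma r1: "(i, j) \<in> fk_gens n \<Longrightarrow> \<exists>L. fa_add (fa_gen i j) (fa_gen j i) = ev L \<and> relH L"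
proof -
  assume "(i, j) \<in> fk_gens n"
  then have "i \<noteq> j" by (simp add: fk_gens_def)
  show ?thesis
    by (rule exI[of _ "[(1, [(i,j)]), (1, [(j,i)])]"])
       (auto simp: fa_add_def fa_gen_def relH_def rel1[OF \<open>i \<noteq> j\<close>])
qed

lemma r2: "(i, j) \<in> fk_gens n \<Longrightarrow> \<exists>L. fa_mult (fa_gen i j) (fa_gen i j) = ev L \<and> relH L"
proof -
  assume "(i, j) \<in> fk_gens n"
  then have "fst (i, j) \<noteq> snd (i, j)" by (simp add: fk_gens_def)
  from rel2[OF this] show ?thesis
    by (intro exI[of _ "[(1, [(i,j),(i,j)])]"])
       (auto simp: fa_gen_def fa_mult_word D2_def fun_eq_iff relH_def)
qed

lemma r3: "distinct [i, j, k, l] \<Longrightarrow>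
  \<exists>L. fa_sub (fa_mult (fa_gen i j) (fa_gen k l)) (fa_mult (fa_gen k l) (fa_gen i j)) = ev L \<and> relH L"
  using rel3[of i j k l]
  by (intro exI[of _ "[(1, [(i,j),(k,l)]), (-1, [(k,l),(i,j)])]"])
     (auto simp: fa_gen_def fa_mult_word D2_def fa_sub_def relH_def)

lemma r4: "distinct [i, j, k] \<Longrightarrow>
  \<exists>L. fa_add (fa_add (fa_mult (fa_gen i j) (fa_gen j k)) (fa_mult (fa_gen j k) (fa_gen k i)))
             (fa_mult (fa_gen k i) (fa_gen i j)) = ev L \<and> relH L"
proof -
  assume d: "distinct [i, j, k]"
  have h: "\<And>q z. D2 (i,j) (j,k) q z + D2 (j,k) (k,i) q z + D2 (k,i) (i,j) q z = 0"
    using rel4[OF d] by (simp add: fun_eq_iff)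
  show ?thesis
    by (intro exI[of _ "[(1, [(i,j),(j,k)]), (1, [(j,k),(k,i)]), (1, [(k,i),(i,j)])]"])
       (auto simp: fa_gen_def fa_mult_word fa_add_def fun_eq_iff relH_def add.assoc[symmetric] h[unfolded D2_def])
qed

lemma rels_ev:
  assumes "r \<in> fk_rels n"
  shows "\<exists>L. r = ev L \<and> relH L"
  using assms unfolding fk_rels_def
  by (elim UnE CollectE exE conjE) (use r1 r2 r3 r4 in blast)+

lemma ideal_rad: "I \<in> fk_ideal n \<Longrightarrow> fin I \<and> (\<forall>Q. fin Q \<longrightarrow> bf I Q = 0)"
proof (induction rule: fk_ideal.induct)
  case zero then show ?case by (simp add: bf_def)
next
  case (gen r u v)
  obtain L where L: "r = ev L" "\<And>q z. (\<Sum>(c, t)\<leftarrow>L. c * Delta_word t (fa_word q) z) = 0"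
    using rels_ev[OF gen(1)] unfolding relH_def by blast
  have fr: "fin r" using L by (simp add: fin_ev)
  show ?case
    using bf_gen[OF fr] applyf_ev_B[OF L(2)] L(1) fin_mult fr by simp
next
  case (add a b)
  then show ?case by (simp add: bf_def fa_add_def applyf_add fin_add)
next
  case (smult a c)
  then show ?case by (simp add: bf_def fa_smult_def applyf_smult fin_smult)
qed

lemma elem_fin: "fa_elem n P \<Longrightarrow> fin P"
  by (simp add: fa_elem_def fin_def supp_def)

lemma Delta_fun: "Delta P Q = (\<lambda>z. applyf (\<lambda>t. Delta_word t Q z) P)"
  by (simp add: Delta_def applyf_def)

lemma Nabla_fun: "Nabla Q P = (\<lambda>z. applyf (\<lambda>s. Nabla_word Q s z) P)"
  by (simp add: Nabla_def applyf_def)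

lemma NB_lin: "fin X \<Longrightarrow> Nabla_word X t [] = applyf (\<lambda>y. B y t) X"
proof -
  assume fX: "fin X"
  have "Nabla_word X t = (\<lambda>z. applyf (\<lambda>y. Nabla_word (fa_word y) t z) X)" using NW_lin[OF fX] by blast
  then show ?thesis by (simp add: N_eq)
qed

lemma fin_Delta: "fin P \<Longrightarrow> fin Q \<Longrightarrow> fin (Delta P Q)"
  unfolding Delta_fun by (rule fin_lin) (use DW_lin in blast)+

lemma fin_Nabla: "fin P \<Longrightarrow> fin Q \<Longrightarrow> fin (Nabla Q P)"
  unfolding Nabla_fun by (rule fin_lin) (use NW_lin in blast)+

lemma Delta_nil: "fin Q \<Longrightarrow> Delta P Q [] = bf P Q"
  by (simp add: Delta_fun bf_def B_lin)

lemma Nabla_nil: "fin P \<Longrightarrow> Nabla P Q [] = bf P Q"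
proof -
  assume fP: "fin P"
  have "Nabla P Q [] = applyf (\<lambda>w. applyf (\<lambda>p. B p w) P) Q"
    by (simp add: Nabla_fun NB_lin[OF fP])
  also have "\<dots> = bf P Q" unfolding bf_def by (subst applyf_swap) simp
  finally show ?thesis .
qed

lemma fin_hcomp: "fin P \<Longrightarrow> fin (fa_hcomp d P)"
  unfolding fin_def supp_def fa_hcomp_def by (erule finite_subset[rotated]) auto

lemma bf_hcomp: assumes fQ: "fin Q" shows "bf (fa_hcomp d P) (fa_hcomp d Q) = bf (fa_hcomp d P) Q"
  unfolding bf_def
proof (rule applyf_cong)
  fix u assume "fa_hcomp d P u \<noteq> 0"
  then have lu: "length u = d" by (simp add: fa_hcomp_def split: if_splits)
  have S: "finite (supp Q)" using fQ by (simp add: fin_def)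
  have "applyf (B u) (fa_hcomp d Q) = (\<Sum>v\<in>supp Q. fa_hcomp d Q v * B u v)"
    by (rule applyf_superset[OF S]) (auto simp: supp_def fa_hcomp_def)
  also have "\<dots> = (\<Sum>v\<in>supp Q. Q v * B u v)"
  proof (rule sum.cong[OF refl])
    fix x assume "x \<in> supp Q"
    show "fa_hcomp d Q x * B u x = Q x * B u x"
    proof (cases "length x = d")
      case True then show ?thesis by (simp add: fa_hcomp_def)
    next
      case False then have "B u x = 0" using B_deg lu by metis
      then show ?thesis by simp
    qed
  qed
  also have "\<dots> = applyf (B u) Q" by (rule applyf_superset[OF S, symmetric]) simp
  finally show "applyf (B u) (fa_hcomp d Q) = applyf (B u) Q" .
qed

lemma fk_pair_bf: assumes fP: "fin P" and fQ: "fin Q" shows "fk_pair P Q = bf P Q"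
proof -
  let ?D = "length ` {w. P w \<noteq> 0}"
  have fD: "finite ?D" using fP by (simp add: fin_def supp_def)
  have "fk_pair P Q = (\<Sum>d\<in>?D. bf (fa_hcomp d P) Q)"
    unfolding fk_pair_def
    by (rule sum.cong) (simp_all add: Delta_nil fin_hcomp fQ bf_hcomp)
  also have "\<dots> = applyf (\<lambda>u. applyf (B u) Q) (\<lambda>y. \<Sum>d\<in>?D. fa_hcomp d P y)"
    unfolding bf_def using applyf_sum_set[OF fD, of "\<lambda>d. fa_hcomp d P"] fin_hcomp[OF fP] by simp
  also have "(\<lambda>y. \<Sum>d\<in>?D. fa_hcomp d P y) = P"
  proof
    fix y
    have "(\<Sum>d\<in>?D. fa_hcomp d P y) = (\<Sum>d\<in>?D. if length y = d then P y else 0)"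
      by (simp add: fa_hcomp_def)
    also have "\<dots> = (if length y \<in> ?D then P y else 0)" using fD by (simp add: sum.delta)
    also have "\<dots> = P y" by auto
    finally show "(\<Sum>d\<in>?D. fa_hcomp d P y) = P y" .
  qed
  finally show ?thesis by (simp add: bf_def)
qed

lemma fin_neg: "fin A \<Longrightarrow> fin (\<lambda>y. - A y)"
  using fin_smult[of A "-1"] by simp

lemma bf_sub: "fin P \<Longrightarrow> fin P' \<Longrightarrow> bf (fa_sub P P') Q = bf P Q - bf P' Q"
  unfolding bf_def fa_sub_def
  using applyf_add[of P "\<lambda>y. - P' y"] fin_neg[of P'] applyf_neg by simp

lemma bf_lin: "fin P \<Longrightarrow> fin P' \<Longrightarrow> bf (fa_add (fa_smult c P) P') Q = c * bf P Q + bf P' Q"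
  unfolding bf_def fa_add_def fa_smult_def
  using applyf_add[of "\<lambda>y. c * P y" P'] fin_smult[of P c] applyf_smult by simp

lemma hom_vanish_D:
  assumes "fa_homog d P" "fa_homog d Q" "v \<noteq> []"
  shows "Delta P Q v = 0"
  unfolding Delta_fun
proof (rule applyf_zero_g)
  fix w assume "P w \<noteq> 0"
  then have "length w = d" using assms(1) by (simp add: fa_homog_def)
  show "Delta_word w Q v = 0"
  proof (rule ccontr)
    assume "Delta_word w Q v \<noteq> 0"
    then obtain z where "Q z \<noteq> 0" "length v + length w = length z" using Delta_word_deg by blast
    then show False using assms \<open>length w = d\<close> by (simp add: fa_homog_def)
  qed
qed

lemma hom_vanish_N:
  assumes "fa_homog d P" "fa_homog d Q" "v \<noteq> []"
  shows "Nabla P Q v = 0"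
  unfolding Nabla_fun
proof (rule applyf_zero_g)
  fix w assume "Q w \<noteq> 0"
  then have "length w = d" using assms(2) by (simp add: fa_homog_def)
  show "Nabla_word P w v = 0"
  proof (rule ccontr)
    assume "Nabla_word P w v \<noteq> 0"
    then obtain z where "P z \<noteq> 0" "length v + length w = length z" using Nabla_word_deg by blast
    then show False using assms \<open>length w = d\<close> by (simp add: fa_homog_def)
  qed
qed

lemma clause1:
  assumes fP: "fin P" and fQ: "fin Q" and hP: "fa_homog d P" and hQ: "fa_homog d Q"
  shows "Delta P Q = (\<lambda>v. if v = [] then bf P Q else 0)" "Delta Q P = (\<lambda>v. if v = [] then bf P Q else 0)"
    "Nabla P Q = (\<lambda>v. if v = [] then bf P Q else 0)" "Nabla Q P = (\<lambda>v. if v = [] then bf P Q else 0)"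
  using hom_vanish_D[OF hP hQ] hom_vanish_D[OF hQ hP] hom_vanish_N[OF hP hQ] hom_vanish_N[OF hQ hP]
    Delta_nil[OF fQ, of P] Delta_nil[OF fP, of Q] Nabla_nil[OF fP, of Q] Nabla_nil[OF fQ, of P] bf_sym[of P Q]
  by (auto intro!: ext)

lemma cong_refl: "fk_cong n X X"
  unfolding fk_cong_def fa_sub_def using fk_ideal.zero by simp

lemma homog0: "fa_homog 0 (\<lambda>v. if v = [] then c else 0)"
  by (simp add: fa_homog_def)

lemma clause2:
  assumes fP: "fin P" and fQ: "fin Q" and hP: "fa_homog d P" and hQ: "fa_homog e Q"
  shows "fk_pair P Q = (if d = e then Delta P Q [] else 0)"
proof (cases "d = e")
  case True then show ?thesis by (simp add: fk_pair_bf fP fQ Delta_nil)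
next
  case False
  have "bf P Q = 0" unfolding bf_def
  proof (rule applyf_zero_g)
    fix u assume "P u \<noteq> 0"
    then have "length u = d" using hP by (simp add: fa_homog_def)
    show "applyf (B u) Q = 0"
    proof (rule applyf_zero_g)
      fix v assume "Q v \<noteq> 0"
      then have "length v = e" using hQ by (simp add: fa_homog_def)
      then show "B u v = 0" using False \<open>length u = d\<close> B_deg by fastforce
    qed
  qed
  then show ?thesis using False by (simp add: fk_pair_bf fP fQ)
qed

lemma clause3:
  assumes "fin P" "fin P'" "fin Q" "fin Q'" "fk_cong n P P'" "fk_cong n Q Q'"
  shows "fk_pair P Q = fk_pair P' Q'"
proof -
  have 1: "bf (fa_sub P P') Q = 0" using ideal_rad[of "fa_sub P P'" n] assms by (simp add: fk_cong_def)
  have 2: "bf (fa_sub Q Q') P' = 0" using ideal_rad[of "fa_sub Q Q'" n] assms by (simp add: fk_cong_def)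
  have "bf P Q = bf P' Q" using 1 bf_sub[of P P' Q] assms by simp
  also have "\<dots> = bf P' Q'" using 2 bf_sub[of Q Q' P'] assms bf_sym[of P'] by simp
  finally show ?thesis using assms by (simp add: fk_pair_bf)
qed

lemma clause6:
  assumes f1: "fin P1" and f2: "fin P2" and fQ: "fin Q"
  shows "fk_pair (fa_mult P1 P2) Q = fk_pair P1 (Delta P2 Q)"
    "fk_pair P1 (Delta P2 Q) = fk_pair P2 (Nabla Q P1)"
proof -
  let ?G = "\<lambda>x. applyf (B x) Q"
  have L: "fk_pair (fa_mult P1 P2) Q = applyf (\<lambda>s. applyf (\<lambda>t. ?G (s @ t)) P2) P1"
    by (simp add: fk_pair_bf fin_mult f1 f2 fQ bf_def applyf_mult)
  have fD: "\<And>t. fin (Delta_word t Q)" using DW_lin[OF fQ] by blast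
  have fN: "\<And>s. fin (Nabla_word Q s)" using NW_lin[OF fQ] by blast
  have Bt: "\<And>t X. applyf (B t) X = applyf (\<lambda>y. B y t) X" by (rule applyf_cong) (rule B_sym)
  have M: "fk_pair P1 (Delta P2 Q) = applyf (\<lambda>s. applyf (\<lambda>t. ?G (s @ t)) P2) P1"
  proof -
    have "fk_pair P1 (Delta P2 Q) = applyf (\<lambda>s. applyf (B s) (Delta P2 Q)) P1"
      by (simp add: fk_pair_bf f1 fin_Delta f2 fQ bf_def)
    also have "\<dots> = applyf (\<lambda>s. applyf (\<lambda>t. applyf (B s) (Delta_word t Q)) P2) P1"
      unfolding Delta_fun by (subst applyf_comp[OF f2 fD]) simp
    also have "\<dots> = applyf (\<lambda>s. applyf (\<lambda>t. ?G (s @ t)) P2) P1"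
      by (simp add: B_lin[symmetric] fD fQ Delta_word_append)
    finally show ?thesis .
  qed
  have R: "fk_pair P2 (Nabla Q P1) = applyf (\<lambda>t. applyf (\<lambda>s. ?G (s @ t)) P1) P2"
  proof -
    have "fk_pair P2 (Nabla Q P1) = applyf (\<lambda>t. applyf (B t) (Nabla Q P1)) P2"
      by (simp add: fk_pair_bf f2 fin_Nabla f1 fQ bf_def)
    also have "\<dots> = applyf (\<lambda>t. applyf (\<lambda>s. applyf (B t) (Nabla_word Q s)) P1) P2"
      unfolding Nabla_fun by (subst applyf_comp[OF f1 fN]) simp
    also have "\<dots> = applyf (\<lambda>t. applyf (\<lambda>s. applyf (\<lambda>y. B y t) (Nabla_word Q s)) P1) P2"
      by (simp only: Bt)
    also have "\<dots> = applyf (\<lambda>t. applyf (\<lambda>s. applyf (\<lambda>y. B y (s @ t)) Q) P1) P2"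
      by (simp add: NB_lin[symmetric] fN fQ Nabla_word_append)
    also have "\<dots> = applyf (\<lambda>t. applyf (\<lambda>s. ?G (s @ t)) P1) P2"
      by (simp only: Bt)
    finally show ?thesis .
  qed
  show "fk_pair (fa_mult P1 P2) Q = fk_pair P1 (Delta P2 Q)" using L M by simp
  show "fk_pair P1 (Delta P2 Q) = fk_pair P2 (Nabla Q P1)" unfolding M R by (rule applyf_swap[of "\<lambda>s t. applyf (B (s @ t)) Q" P2 P1])
qed

theorem mainTheorem14:
  fixes n :: nat
  assumes "n \<ge> 1"
  shows
   "(\<forall>d P Q. fa_elem n P \<and> fa_elem n Q \<and> fa_homog d P \<and> fa_homog d Q \<longrightarrow>
        fk_cong n (Delta P Q) (Delta Q P) \<and> fk_cong n (Delta Q P) (Nabla P Q)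
      \<and> fk_cong n (Nabla P Q) (Nabla Q P)
      \<and> fa_homog 0 (Delta P Q) \<and> fa_homog 0 (Delta Q P) \<and> fa_homog 0 (Nabla P Q)
      \<and> fa_homog 0 (Nabla Q P))
  \<and> (\<forall>d e P Q. fa_elem n P \<and> fa_elem n Q \<and> fa_homog d P \<and> fa_homog e Q \<longrightarrow>
        fk_pair P Q = (if d = e then Delta P Q [] else 0))
  \<and> (\<forall>P P' Q Q'. fa_elem n P \<and> fa_elem n P' \<and> fa_elem n Q \<and> fa_elem n Q' \<and>
        fk_cong n P P' \<and> fk_cong n Q Q' \<longrightarrow> fk_pair P Q = fk_pair P' Q')
  \<and> (\<forall>c P P' Q. fa_elem n P \<and> fa_elem n P' \<and> fa_elem n Q \<longrightarrow>
        fk_pair (fa_add (fa_smult c P) P') Q = c * fk_pair P Q + fk_pair P' Q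
      \<and> fk_pair Q (fa_add (fa_smult c P) P') = c * fk_pair Q P + fk_pair Q P')
  \<and> (\<forall>P Q. fa_elem n P \<and> fa_elem n Q \<longrightarrow> fk_pair P Q = fk_pair Q P)
  \<and> (\<forall>P1 P2 Q. fa_elem n P1 \<and> fa_elem n P2 \<and> fa_elem n Q \<longrightarrow>
        fk_pair (fa_mult P1 P2) Q = fk_pair P1 (Delta P2 Q)
      \<and> fk_pair P1 (Delta P2 Q) = fk_pair P2 (Nabla Q P1))"
  proof -
  have c1: "\<forall>d P Q. fa_elem n P \<and> fa_elem n Q \<and> fa_homog d P \<and> fa_homog d Q \<longrightarrow>
        fk_cong n (Delta P Q) (Delta Q P) \<and> fk_cong n (Delta Q P) (Nabla P Q)
      \<and> fk_cong n (Nabla P Q) (Nabla Q P)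
      \<and> fa_homog 0 (Delta P Q) \<and> fa_homog 0 (Delta Q P) \<and> fa_homog 0 (Nabla P Q)
      \<and> fa_homog 0 (Nabla Q P)"
  proof (intro allI impI)
    fix d P Q assume h: "fa_elem n P \<and> fa_elem n Q \<and> fa_homog d P \<and> fa_homog d Q"
    then have "fin P" "fin Q" "fa_homog d P" "fa_homog d Q" by (auto intro: elem_fin)
    note e = clause1[OF this]
    show "fk_cong n (Delta P Q) (Delta Q P) \<and> fk_cong n (Delta Q P) (Nabla P Q)
      \<and> fk_cong n (Nabla P Q) (Nabla Q P)
      \<and> fa_homog 0 (Delta P Q) \<and> fa_homog 0 (Delta Q P) \<and> fa_homog 0 (Nabla P Q)
      \<and> fa_homog 0 (Nabla Q P)"
      unfolding e by (simp add: cong_refl homog0)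
  qed
  have c2: "\<forall>d e P Q. fa_elem n P \<and> fa_elem n Q \<and> fa_homog d P \<and> fa_homog e Q \<longrightarrow>
        fk_pair P Q = (if d = e then Delta P Q [] else 0)"
    using clause2 elem_fin by blast
  have c3: "\<forall>P P' Q Q'. fa_elem n P \<and> fa_elem n P' \<and> fa_elem n Q \<and> fa_elem n Q' \<and>
        fk_cong n P P' \<and> fk_cong n Q Q' \<longrightarrow> fk_pair P Q = fk_pair P' Q'"
    using clause3 elem_fin by blast
  have c4: "\<forall>c P P' Q. fa_elem n P \<and> fa_elem n P' \<and> fa_elem n Q \<longrightarrow>
        fk_pair (fa_add (fa_smult c P) P') Q = c * fk_pair P Q + fk_pair P' Q
      \<and> fk_pair Q (fa_add (fa_smult c P) P') = c * fk_pair Q P + fk_pair Q P'"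
  proof (intro allI impI)
    fix c P P' Q assume "fa_elem n P \<and> fa_elem n P' \<and> fa_elem n Q"
    then have f: "fin P" "fin P'" "fin Q" by (auto intro: elem_fin)
    have fs: "fin (fa_add (fa_smult c P) P')"
      using f fin_add[OF fin_smult[of P c] f(2)] by (simp add: fa_add_def fa_smult_def)
    show "fk_pair (fa_add (fa_smult c P) P') Q = c * fk_pair P Q + fk_pair P' Q
      \<and> fk_pair Q (fa_add (fa_smult c P) P') = c * fk_pair Q P + fk_pair Q P'"
      using f fs bf_lin[OF f(1,2), of c Q] by (simp add: fk_pair_bf bf_sym[of Q])
  qed
  have c5: "\<forall>P Q. fa_elem n P \<and> fa_elem n Q \<longrightarrow> fk_pair P Q = fk_pair Q P"
    using elem_fin fk_pair_bf bf_sym by metis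
  have c6: "\<forall>P1 P2 Q. fa_elem n P1 \<and> fa_elem n P2 \<and> fa_elem n Q \<longrightarrow>
        fk_pair (fa_mult P1 P2) Q = fk_pair P1 (Delta P2 Q)
      \<and> fk_pair P1 (Delta P2 Q) = fk_pair P2 (Nabla Q P1)"
    using clause6 elem_fin by blast
  show ?thesis using c1 c2 c3 c4 c5 c6 by blast
qed

end
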